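(* Let $\Gamma$ be a connected connected-homogeneous locally-finite bipartite graph with bipartition $X\cup Y$. Let $x\in X$ and $y\in Y$ be adjacent, and define $A=\Gamma(x)\setminus\{y\}$ and $B=\Gamma(y)\setminus\{x\}$. Then $\Omega=\langle A\cup B\rangle$ (with bipartition $A\cup B$) is a finite homogeneous bipartite graph, and therefore is one of: a null bipartite graph, a complete bipartite graph, the complement of a perfect matching, or a perfect matching.
   Context: $\Gamma(v)$ denotes the set of neighbours of $v$ and $\langle S\rangle$ the induced subgraph on $S$. A bipartite graph with given bipartition $X\cup Y$ is a homogeneous bipartite graph if every isomorphism between finite induced subgraphs mapping vertices of $X$ to vertices of $X$ and vertices of $Y$ to vertices of $Y$ extends to an automorphism preserving $X$ and $Y$ setwise; it is a connected-homogeneous bipartite graph if this holds for isomorphisms between finite connected induced subgraphs. A null bipartite graph has no edges. The complement of a perfect matching on $2n$ vertices has parts $X',Y'$ of size $n$, a bijection $\eta:X'\to Y'$, and $x'\sim y'$ iff $y'\ne\eta(x')$. *)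

theory Defs
  imports Main
begin

definition bip_graph :: "'a set \<Rightarrow> 'a set \<Rightarrow> 'a set \<Rightarrow> ('a \<Rightarrow> 'a \<Rightarrow> bool) \<Rightarrow> bool" where
  "bip_graph V X Y E \<longleftrightarrow>
     (\<forall>u v. E u v \<longrightarrow> E v u) \<and> (\<forall>u v. E u v \<longrightarrow> u \<in> V \<and> v \<in> V) \<and>
     X \<inter> Y = {} \<and> X \<union> Y = V \<and>
     (\<forall>u v. E u v \<longrightarrow> (u \<in> X \<and> v \<in> Y) \<or> (u \<in> Y \<and> v \<in> X))"

definition nbrs :: "('a \<Rightarrow> 'a \<Rightarrow> bool) \<Rightarrow> 'a \<Rightarrow> 'a set" where
  "nbrs E v = {u. E v u}"

definition induced :: "('a \<Rightarrow> 'a \<Rightarrow> bool) \<Rightarrow> 'a set \<Rightarrow> 'a \<Rightarrow> 'a \<Rightarrow> bool" where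
  "induced E S u v \<longleftrightarrow> u \<in> S \<and> v \<in> S \<and> E u v"

definition connected_on :: "('a \<Rightarrow> 'a \<Rightarrow> bool) \<Rightarrow> 'a set \<Rightarrow> bool" where
  "connected_on E S \<longleftrightarrow> S \<noteq> {} \<and> (\<forall>u\<in>S. \<forall>v\<in>S. (induced E S)\<^sup>*\<^sup>* u v)"

definition locally_finite :: "'a set \<Rightarrow> ('a \<Rightarrow> 'a \<Rightarrow> bool) \<Rightarrow> bool" where
  "locally_finite V E \<longleftrightarrow> (\<forall>v\<in>V. finite (nbrs E v))"

definition bip_iso ::
  "'a set \<Rightarrow> 'a set \<Rightarrow> ('a \<Rightarrow> 'a \<Rightarrow> bool) \<Rightarrow> 'a set \<Rightarrow> 'a set \<Rightarrow> ('a \<Rightarrow> 'a) \<Rightarrow> bool" where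
  "bip_iso X Y E S T f \<longleftrightarrow>
     bij_betw f S T \<and> (\<forall>u\<in>S. \<forall>v\<in>S. E u v \<longleftrightarrow> E (f u) (f v)) \<and>
     f ` (S \<inter> X) \<subseteq> X \<and> f ` (S \<inter> Y) \<subseteq> Y"

definition bip_aut :: "'a set \<Rightarrow> 'a set \<Rightarrow> 'a set \<Rightarrow> ('a \<Rightarrow> 'a \<Rightarrow> bool) \<Rightarrow> ('a \<Rightarrow> 'a) \<Rightarrow> bool" where
  "bip_aut V X Y E g \<longleftrightarrow>
     bij_betw g V V \<and> (\<forall>u\<in>V. \<forall>v\<in>V. E u v \<longleftrightarrow> E (g u) (g v)) \<and> g ` X = X \<and> g ` Y = Y"

definition homogeneous_bip :: "'a set \<Rightarrow> 'a set \<Rightarrow> 'a set \<Rightarrow> ('a \<Rightarrow> 'a \<Rightarrow> bool) \<Rightarrow> bool" where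
  "homogeneous_bip V X Y E \<longleftrightarrow> bip_graph V X Y E \<and>
     (\<forall>S T f. S \<subseteq> V \<and> T \<subseteq> V \<and> finite S \<and> bip_iso X Y E S T f \<longrightarrow>
        (\<exists>g. bip_aut V X Y E g \<and> (\<forall>v\<in>S. g v = f v)))"

definition conn_homogeneous_bip :: "'a set \<Rightarrow> 'a set \<Rightarrow> 'a set \<Rightarrow> ('a \<Rightarrow> 'a \<Rightarrow> bool) \<Rightarrow> bool" where
  "conn_homogeneous_bip V X Y E \<longleftrightarrow> bip_graph V X Y E \<and>
     (\<forall>S T f. S \<subseteq> V \<and> T \<subseteq> V \<and> finite S \<and> connected_on E S \<and> connected_on E T \<and>
        bip_iso X Y E S T f \<longrightarrow>
        (\<exists>g. bip_aut V X Y E g \<and> (\<forall>v\<in>S. g v = f v)))"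

definition null_bip :: "'a set \<Rightarrow> 'a set \<Rightarrow> ('a \<Rightarrow> 'a \<Rightarrow> bool) \<Rightarrow> bool" where
  "null_bip X Y E \<longleftrightarrow> (\<forall>x\<in>X. \<forall>y\<in>Y. \<not> E x y)"

definition complete_bip :: "'a set \<Rightarrow> 'a set \<Rightarrow> ('a \<Rightarrow> 'a \<Rightarrow> bool) \<Rightarrow> bool" where
  "complete_bip X Y E \<longleftrightarrow> (\<forall>x\<in>X. \<forall>y\<in>Y. E x y)"

definition perfect_matching_bip :: "'a set \<Rightarrow> 'a set \<Rightarrow> ('a \<Rightarrow> 'a \<Rightarrow> bool) \<Rightarrow> bool" where
  "perfect_matching_bip X Y E \<longleftrightarrow>
     (\<exists>\<eta>. bij_betw \<eta> X Y \<and> (\<forall>x\<in>X. \<forall>y\<in>Y. E x y \<longleftrightarrow> y = \<eta> x))"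

definition co_perfect_matching_bip :: "'a set \<Rightarrow> 'a set \<Rightarrow> ('a \<Rightarrow> 'a \<Rightarrow> bool) \<Rightarrow> bool" where
  "co_perfect_matching_bip X Y E \<longleftrightarrow>
     (\<exists>\<eta>. bij_betw \<eta> X Y \<and> (\<forall>x\<in>X. \<forall>y\<in>Y. E x y \<longleftrightarrow> y \<noteq> \<eta> x))"

end

theory Submission
  imports Defs
begin

definition sw :: "'a \<Rightarrow> 'a \<Rightarrow> 'a \<Rightarrow> 'a" where
  "sw b c v = (if v = b then c else if v = c then b else v)"

lemma sw_sw[simp]: "sw b c (sw b c v) = v" by (auto simp: sw_def)

lemma sw_image: "sw b c ` D = {v. sw b c v \<in> D}"
proof
  show "sw b c ` D \<subseteq> {v. sw b c v \<in> D}" by auto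
  show "{v. sw b c v \<in> D} \<subseteq> sw b c ` D"
  proof
    fix v assume "v \<in> {v. sw b c v \<in> D}"
    then have "sw b c (sw b c v) \<in> sw b c ` D" by blast
    then show "v \<in> sw b c ` D" by simp
  qed
qed

lemma sw_bij: "b \<in> Y \<Longrightarrow> c \<in> Y \<Longrightarrow> bij_betw (sw b c) Y Y"
  apply (rule bij_betw_byWitness[where f'="sw b c"])
  by (auto simp: sw_def)

lemma two_elems: "finite D \<Longrightarrow> card D \<ge> 2 \<Longrightarrow> \<exists>p q. p \<in> D \<and> q \<in> D \<and> p \<noteq> q"
proof -
  assume f: "finite D" and c: "card D \<ge> 2"
  have "D \<noteq> {}" using c by auto
  then obtain p where p: "p \<in> D" by blast
  have "card (D - {p}) \<ge> 1" using f c p by (simp add: card_Diff_singleton)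
  then have "D - {p} \<noteq> {}" by (metis card.empty not_one_le_zero)
  then obtain q where "q \<in> D - {p}" by blast
  then show ?thesis using p by blast
qed

lemma aut_nbrs:
  assumes "bip_graph V X Y E" "bip_aut V X Y E g" "a \<in> V"
  shows "nbrs E (g a) = g ` nbrs E a"
proof
  have gv: "g ` V = V" "inj_on g V" using assms(2) by (auto simp: bip_aut_def bij_betw_def)
  have iff: "\<And>u v. u \<in> V \<Longrightarrow> v \<in> V \<Longrightarrow> E u v \<longleftrightarrow> E (g u) (g v)"
    using assms(2) by (auto simp: bip_aut_def)
  have inV: "\<And>u v. E u v \<Longrightarrow> u \<in> V \<and> v \<in> V" using assms(1) by (auto simp: bip_graph_def)
  show "g ` nbrs E a \<subseteq> nbrs E (g a)"
  proof
    fix c assume "c \<in> g ` nbrs E a"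
    then obtain b where b: "E a b" "c = g b" by (auto simp: nbrs_def)
    then have "b \<in> V" using inV by blast
    then have "E (g a) (g b)" using iff[OF assms(3)] b(1) by blast
    then show "c \<in> nbrs E (g a)" using b by (simp add: nbrs_def)
  qed
  show "nbrs E (g a) \<subseteq> g ` nbrs E a"
  proof
    fix c assume "c \<in> nbrs E (g a)"
    then have c: "E (g a) c" by (simp add: nbrs_def)
    then have "c \<in> V" using inV by blast
    then obtain b where b: "b \<in> V" "c = g b" using gv by blast
    then have "E a b" using iff c assms(3) by blast
    then show "c \<in> g ` nbrs E a" using b by (auto simp: nbrs_def)
  qed
qed

lemma noXX: "bip_graph V X Y E \<Longrightarrow> u \<in> X \<Longrightarrow> v \<in> X \<Longrightarrow> \<not> E u v"
  unfolding bip_graph_def by blast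
lemma noYY: "bip_graph V X Y E \<Longrightarrow> u \<in> Y \<Longrightarrow> v \<in> Y \<Longrightarrow> \<not> E u v"
  unfolding bip_graph_def by blast

lemma hom_ext:
  "homogeneous_bip V X Y E \<Longrightarrow> S \<subseteq> V \<Longrightarrow> T \<subseteq> V \<Longrightarrow> finite S \<Longrightarrow> bip_iso X Y E S T f
   \<Longrightarrow> \<exists>g. bip_aut V X Y E g \<and> (\<forall>v\<in>S. g v = f v)"
  unfolding homogeneous_bip_def by blast

lemma nbrs_sub:
  assumes "bip_graph V X Y E" "a \<in> X" shows "nbrs E a \<subseteq> Y"
  using assms unfolding bip_graph_def nbrs_def by blast

lemma single_trans:
  assumes h: "homogeneous_bip V X Y E" and a: "a \<in> X" "a' \<in> X"
  shows "card (nbrs E a) = card (nbrs E a')"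
proof -
  have bg: "bip_graph V X Y E" using h by (simp add: homogeneous_bip_def)
  have XV: "X \<subseteq> V" using bg by (auto simp: bip_graph_def)
  have noXX: "\<And>u v. u \<in> X \<Longrightarrow> v \<in> X \<Longrightarrow> \<not> E u v" using noXX[OF bg] by blast
  have XY: "X \<inter> Y = {}" using bg by (auto simp: bip_graph_def)
  have "bip_iso X Y E {a} {a'} (\<lambda>_. a')"
    using a noXX XY by (auto simp: bip_iso_def bij_betw_def)
  then obtain g where g: "bip_aut V X Y E g" "g a = a'"
    using hom_ext[OF h, of "{a}" "{a'}"] a XV by auto
  have inj: "inj_on g V" using g(1) by (auto simp: bip_aut_def bij_betw_def)
  have "nbrs E a' = g ` nbrs E a" using aut_nbrs[OF bg g(1)] a XV g(2) by auto
  moreover have "nbrs E a \<subseteq> V" using nbrs_sub[OF bg a(1)] bg by (auto simp: bip_graph_def)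
  ultimately show ?thesis using inj by (metis card_image inj_on_subset)
qed

lemma pair_trans:
  assumes h: "homogeneous_bip V X Y E" and a: "a \<in> X" "a' \<in> X" "a1 \<in> X" "a2 \<in> X"
    and d: "a \<noteq> a'" "a1 \<noteq> a2"
  shows "card (nbrs E a \<inter> nbrs E a') = card (nbrs E a1 \<inter> nbrs E a2)"
proof -
  have bg: "bip_graph V X Y E" using h by (simp add: homogeneous_bip_def)
  have XV: "X \<subseteq> V" using bg by (auto simp: bip_graph_def)
  have noXX: "\<And>u v. u \<in> X \<Longrightarrow> v \<in> X \<Longrightarrow> \<not> E u v" using noXX[OF bg] by blast
  have XY: "X \<inter> Y = {}" using bg by (auto simp: bip_graph_def)
  let ?f = "\<lambda>v. if v = a then a1 else a2"
  have "bip_iso X Y E {a, a'} {a1, a2} ?f"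
    using a d noXX XY by (auto simp: bip_iso_def bij_betw_def inj_on_def)
  then have "\<exists>g. bip_aut V X Y E g \<and> (\<forall>v\<in>{a,a'}. g v = ?f v)"
    using a XV by (intro hom_ext[OF h]) auto
  then obtain g where g: "bip_aut V X Y E g" "\<forall>v\<in>{a,a'}. g v = ?f v" by blast
  have inj: "inj_on g V" using g(1) by (auto simp: bip_aut_def bij_betw_def)
  have NV: "nbrs E a \<subseteq> V" "nbrs E a' \<subseteq> V"
    using nbrs_sub[OF bg] a bg by (auto simp: bip_graph_def)
  have "nbrs E a1 = g ` nbrs E a" "nbrs E a2 = g ` nbrs E a'"
    using aut_nbrs[OF bg g(1)] a XV g(2) d by auto
  then have "nbrs E a1 \<inter> nbrs E a2 = g ` (nbrs E a \<inter> nbrs E a')"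
    using inj_on_image_Int[OF inj NV] by simp
  moreover have "inj_on g (nbrs E a \<inter> nbrs E a')" using inj NV by (meson inf.coboundedI1 inj_on_subset)
  ultimately show ?thesis by (simp add: card_image)
qed

lemma swap_trans:
  assumes h: "homogeneous_bip V X Y E" and fin: "finite V" and bc: "b \<in> Y" "c \<in> Y" and a: "a \<in> X"
  shows "\<exists>a'\<in>X. nbrs E a' = sw b c ` nbrs E a"
proof -
  have bg: "bip_graph V X Y E" using h by (simp add: homogeneous_bip_def)
  have YV: "Y \<subseteq> V" "X \<subseteq> V" using bg by (auto simp: bip_graph_def)
  have noYY: "\<And>u v. u \<in> Y \<Longrightarrow> v \<in> Y \<Longrightarrow> \<not> E u v" using noYY[OF bg] by blast
  have XY: "X \<inter> Y = {}" using bg by (auto simp: bip_graph_def)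
  have swY: "\<And>v. v \<in> Y \<Longrightarrow> sw b c v \<in> Y" using bc by (auto simp: sw_def)
  have "bip_iso X Y E Y Y (sw b c)"
    unfolding bip_iso_def using sw_bij[OF bc] noYY swY XY by auto
  then obtain g where g: "bip_aut V X Y E g" "\<forall>v\<in>Y. g v = sw b c v"
    using hom_ext[OF h YV(1) YV(1)] fin YV finite_subset by blast
  have "g a \<in> X" using g(1) a by (auto simp: bip_aut_def)
  moreover have "nbrs E (g a) = g ` nbrs E a" using aut_nbrs[OF bg g(1)] a YV by auto
  moreover have "g ` nbrs E a = sw b c ` nbrs E a"
    using nbrs_sub[OF bg a] g(2) by (intro image_cong) auto
  ultimately show ?thesis by metis
qed

lemma classify:
  assumes h: "homogeneous_bip V X Y E" and fin: "finite V"
  shows "null_bip X Y E \<or> complete_bip X Y E \<or> co_perfect_matching_bip X Y E \<or>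
     perfect_matching_bip X Y E"
proof (rule ccontr)
  assume nc: "\<not> ?thesis"
  have bg: "bip_graph V X Y E" using h by (simp add: homogeneous_bip_def)
  have YV: "Y \<subseteq> V" "X \<subseteq> V" using bg by (auto simp: bip_graph_def)
  have finY: "finite Y" using fin YV finite_subset by blast
  let ?N = "nbrs E"
  have NY: "\<And>a. a \<in> X \<Longrightarrow> ?N a \<subseteq> Y" using nbrs_sub[OF bg] by blast
  have finN: "\<And>a. a \<in> X \<Longrightarrow> finite (?N a)" using NY finY finite_subset by blast
  have memN: "\<And>a b. b \<in> ?N a \<longleftrightarrow> E a b" by (simp add: nbrs_def)
  obtain a0 b0 where ab0: "a0 \<in> X" "b0 \<in> Y" "E a0 b0" using nc by (auto simp: null_bip_def)
  obtain a1 b1 where ab1: "a1 \<in> X" "b1 \<in> Y" "\<not> E a1 b1" using nc by (auto simp: complete_bip_def)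
  define D where "D = ?N a1"
  define d where "d = card D"
  define m where "m = card Y"
  have deg: "\<And>a. a \<in> X \<Longrightarrow> card (?N a) = d"
    unfolding d_def D_def using single_trans[OF h _ ab1(1)] by blast
  have "card (?N a0) \<ge> 1" using ab0 finN[OF ab0(1)] memN
    by (metis One_nat_def Suc_leI card_gt_0_iff empty_iff)
  then have d1: "d \<ge> 1" using deg ab0 by simp
  have "D \<subset> Y" using NY[OF ab1(1)] ab1 memN unfolding D_def by blast
  then have dm: "d < m" unfolding d_def m_def using finY psubset_card_mono by blast
  have DY: "D \<subseteq> Y" "finite D" using NY[OF ab1(1)] finN[OF ab1(1)] unfolding D_def by auto
  have hasn: "\<And>b. b \<in> Y \<Longrightarrow> \<exists>a\<in>X. E a b"
  proof -
    fix b assume b: "b \<in> Y"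
    have "D \<noteq> {}" using d1 unfolding d_def by auto
    then obtain p where p: "p \<in> D" by blast
    obtain a' where a': "a' \<in> X" "?N a' = sw b p ` D"
      using swap_trans[OF h fin b _ ab1(1)] p DY unfolding D_def by blast
    have "b \<in> ?N a'" using a'(2) p unfolding sw_image by (simp add: sw_def)
    then show "\<exists>a\<in>X. E a b" using a' memN by blast
  qed
  have hasnn: "\<And>b. b \<in> Y \<Longrightarrow> \<exists>a\<in>X. \<not> E a b"
  proof -
    fix b assume b: "b \<in> Y"
    obtain a' where a': "a' \<in> X" "?N a' = sw b b1 ` D"
      using swap_trans[OF h fin b ab1(2) ab1(1)] unfolding D_def by blast
    have "b1 \<notin> D" using ab1 memN unfolding D_def by blast
    then have "b \<notin> ?N a'" using a'(2) unfolding sw_image by (simp add: sw_def)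
    then show "\<exists>a\<in>X. \<not> E a b" using a' memN by blast
  qed
  have other: "\<And>b. b \<in> Y \<Longrightarrow> \<exists>c\<in>Y. c \<noteq> b"
  proof -
    fix b assume b: "b \<in> Y"
    have "card (Y - {b}) \<ge> 1" using b finY dm d1 unfolding m_def by (simp add: card_Diff_singleton)
    then have "Y - {b} \<noteq> {}" by (metis card.empty not_one_le_zero)
    then show "\<exists>c\<in>Y. c \<noteq> b" by blast
  qed
  consider "d = 1" | "d = m - 1" | "d \<ge> 2 \<and> m - d \<ge> 2" using d1 dm by linarith
  then show False
  proof cases
    case 1
    define eta where "eta = (\<lambda>a. the_elem (?N a))"
    have Neta: "\<And>a. a \<in> X \<Longrightarrow> ?N a = {eta a}"
      using deg 1 unfolding eta_def by (metis One_nat_def card_1_singleton_iff the_elem_eq)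
    have iff: "\<forall>a\<in>X. \<forall>b\<in>Y. E a b \<longleftrightarrow> b = eta a"
      using Neta memN by blast
    have iff': "\<And>a b. a \<in> X \<Longrightarrow> b \<in> Y \<Longrightarrow> E a b \<longleftrightarrow> b = eta a" using iff by blast
    have etaY: "\<And>a. a \<in> X \<Longrightarrow> eta a \<in> Y" using Neta NY by blast
    have inj: "inj_on eta X"
    proof (rule inj_onI, rule ccontr)
      fix a a' assume a: "a \<in> X" "a' \<in> X" "eta a = eta a'" "a \<noteq> a'"
      obtain c where c: "c \<in> Y" "c \<noteq> eta a" using other etaY a by blast
      obtain a'' where a'': "a'' \<in> X" "E a'' c" using hasn c by blast
      have e'': "eta a'' = c" using iff' a'' c by simp
      have "a \<noteq> a''" using e'' c by auto
      then have "card (?N a \<inter> ?N a') = card (?N a \<inter> ?N a'')"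
        using pair_trans[OF h a(1) a(2) a(1) a''(1) a(4)] by blast
      then show False using Neta a a'' e'' c by simp
    qed
    have "eta ` X = Y"
    proof
      show "eta ` X \<subseteq> Y" using etaY by blast
      show "Y \<subseteq> eta ` X"
      proof
        fix b assume b: "b \<in> Y"
        then obtain a where "a \<in> X" "E a b" using hasn by blast
        then show "b \<in> eta ` X" using iff' b by auto
      qed
    qed
    then have "perfect_matching_bip X Y E" unfolding perfect_matching_bip_def
      using inj iff by (auto simp: bij_betw_def)
    then show False using nc by blast
  next
    case 2
    have cd: "\<And>a. a \<in> X \<Longrightarrow> card (Y - ?N a) = 1"
      using deg 2 NY finY dm d1 unfolding m_def by (simp add: card_Diff_subset finN)
    define eta where "eta = (\<lambda>a. the_elem (Y - ?N a))"
    have Neta: "Y - ?N a = {eta a}" if a: "a \<in> X" for a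
    proof -
      have "card (Y - ?N a) = Suc 0" using cd[OF a] by simp
      then obtain b where "Y - ?N a = {b}" unfolding card_1_singleton_iff by blast
      then show ?thesis unfolding eta_def by simp
    qed
    have Neta2: "\<And>a. a \<in> X \<Longrightarrow> ?N a = Y - {eta a}"
      using Neta NY by blast
    have iff: "\<forall>a\<in>X. \<forall>b\<in>Y. E a b \<longleftrightarrow> b \<noteq> eta a"
      using Neta2 memN by blast
    have iff': "\<And>a b. a \<in> X \<Longrightarrow> b \<in> Y \<Longrightarrow> E a b \<longleftrightarrow> b \<noteq> eta a" using iff by blast
    have etaY: "\<And>a. a \<in> X \<Longrightarrow> eta a \<in> Y" using Neta by blast
    have inj: "inj_on eta X"
    proof (rule inj_onI, rule ccontr)
      fix a a' assume a: "a \<in> X" "a' \<in> X" "eta a = eta a'" "a \<noteq> a'"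
      obtain c where c: "c \<in> Y" "c \<noteq> eta a" using other etaY a by blast
      obtain a'' where a'': "a'' \<in> X" "\<not> E a'' c" using hasnn c by blast
      have e'': "eta a'' = c" using iff' a'' c by simp
      have "a \<noteq> a''" using e'' c by auto
      then have eq: "card (?N a \<inter> ?N a') = card (?N a \<inter> ?N a'')"
        using pair_trans[OF h a(1) a(2) a(1) a''(1) a(4)] by blast
      have "?N a \<inter> ?N a' = Y - {eta a}" using Neta2 a by auto
      moreover have "?N a \<inter> ?N a'' = (Y - {eta a}) - {c}" using Neta2 a a'' e'' by auto
      moreover have "card (Y - {eta a}) = m - 1" using etaY a finY unfolding m_def by simp
      moreover have "card ((Y - {eta a}) - {c}) = m - 2" using etaY a finY c unfolding m_def by simp
      ultimately show False using eq dm d1 by simp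
    qed
    have "eta ` X = Y"
    proof
      show "eta ` X \<subseteq> Y" using etaY by blast
      show "Y \<subseteq> eta ` X"
      proof
        fix b assume b: "b \<in> Y"
        then obtain a where "a \<in> X" "\<not> E a b" using hasnn by blast
        then show "b \<in> eta ` X" using iff' b by auto
      qed
    qed
    then have "co_perfect_matching_bip X Y E" unfolding co_perfect_matching_bip_def
      using inj iff by (auto simp: bij_betw_def)
    then show False using nc by blast
  next
    case 3
    obtain p q where pq: "p \<in> D" "q \<in> D" "p \<noteq> q" using two_elems[OF DY(2)] 3 d_def by blast
    have "card (Y - D) = m - d" using DY finY unfolding m_def d_def by (simp add: card_Diff_subset)
    then obtain r s where rs: "r \<in> Y - D" "s \<in> Y - D" "r \<noteq> s"
      using two_elems[of "Y - D"] 3 finY by auto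
    obtain a2 where a2: "a2 \<in> X" "?N a2 = sw p r ` D"
      using swap_trans[OF h fin _ _ ab1(1)] pq rs DY unfolding D_def by blast
    obtain a3 where a3: "a3 \<in> X" "?N a3 = sw q s ` ?N a2"
      using swap_trans[OF h fin _ _ a2(1)] pq rs DY by blast
    have i2: "D \<inter> ?N a2 = D - {p}" using a2(2) pq rs unfolding sw_image by (auto simp: sw_def)
    have i3: "D \<inter> ?N a3 = D - {p, q}" using a3(2) a2(2) pq rs unfolding sw_image by (auto simp: sw_def)
    have "r \<in> ?N a2" "r \<in> ?N a3" using a3(2) a2(2) pq rs unfolding sw_image by (auto simp: sw_def)
    then have "a1 \<noteq> a2" "a1 \<noteq> a3" using rs unfolding D_def by auto
    then have "card (?N a1 \<inter> ?N a2) = card (?N a1 \<inter> ?N a3)"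
      using pair_trans[OF h ab1(1) a2(1) ab1(1) a3(1)] by blast
    then have eq: "card (D - {p}) = card (D - {p, q})" using i2 i3 unfolding D_def by simp
    have e1: "card (D - {p}) = d - 1" using pq DY unfolding d_def by simp
    have e2: "card (D - {p, q}) = d - 2" using pq DY unfolding d_def by (simp add: card_Diff_subset)
    have "d - 1 = d - 2" using eq unfolding e1 e2 .
    then show False using 3 by arith
  qed
qed

lemma omega_hom:
  assumes ch: "conn_homogeneous_bip V X Y E"
    and x: "x \<in> X" and y: "y \<in> Y" and xy: "E x y"
    and A_def: "A = nbrs E x - {y}" and B_def: "B = nbrs E y - {x}"
  shows "homogeneous_bip (A \<union> B) A B (induced E (A \<union> B))"
proof -
  have bg: "bip_graph V X Y E" using ch by (simp add: conn_homogeneous_bip_def)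
  have sym: "\<And>u v. E u v \<Longrightarrow> E v u" using bg by (simp add: bip_graph_def)
  have inV: "\<And>u v. E u v \<Longrightarrow> u \<in> V \<and> v \<in> V" using bg by (simp add: bip_graph_def)
  have XY: "X \<inter> Y = {}" "X \<union> Y = V" using bg by (auto simp: bip_graph_def)
  have AY: "A \<subseteq> Y" using nbrs_sub[OF bg x] A_def by blast
  have BX: "B \<subseteq> X"
  proof
    fix u assume "u \<in> B"
    then have "E y u" by (simp add: B_def nbrs_def)
    then show "u \<in> X" using bg y XY unfolding bip_graph_def by blast
  qed
  have Ax: "E x u \<and> E u x \<and> \<not> E u y \<and> \<not> E y u" if u: "u \<in> A" for u
  proof -
    have 1: "E x u" using u by (simp add: A_def nbrs_def)
    have 2: "E u x" using sym[OF 1] .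
    have "u \<in> Y" using AY u by blast
    then show ?thesis using 1 2 noYY[OF bg _ y] noYY[OF bg y] by blast
  qed
  have By: "E y u \<and> E u y \<and> \<not> E u x \<and> \<not> E x u" if u: "u \<in> B" for u
  proof -
    have 1: "E y u" using u by (simp add: B_def nbrs_def)
    have 2: "E u y" using sym[OF 1] .
    have "u \<in> X" using BX u by blast
    then show ?thesis using 1 2 noXX[OF bg _ x] noXX[OF bg x] by blast
  qed
  have xyAB: "x \<notin> A \<union> B" "y \<notin> A \<union> B" "x \<noteq> y"
    using AY BX x y XY by (auto simp: A_def B_def)
  have nxx: "\<not> E x x" "\<not> E y y" using noXX[OF bg x x] noYY[OF bg y y] by auto
  have yx: "E y x" using sym xy by blast
  have ABV: "A \<union> B \<subseteq> V" using AY BX XY by blast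
  have xyV: "x \<in> V" "y \<in> V" using x y XY by auto
  have AB: "A \<inter> B = {}" using AY BX XY by blast
  have conn: "connected_on E (S \<union> {x, y})" if S: "S \<subseteq> A \<union> B" for S
  proof -
    let ?S = "S \<union> {x, y}"
    let ?R = "induced E ?S"
    have to: "?R\<^sup>*\<^sup>* u x \<and> ?R\<^sup>*\<^sup>* x u" if u: "u \<in> ?S" for u
    proof -
      have Rxy: "?R x y" "?R y x" using xy yx by (auto simp: induced_def)
      consider "u = x" | "u = y" | "u \<in> A" | "u \<in> B" using u S by blast
      then show ?thesis
      proof cases
        case 1 then show ?thesis by simp
      next
        case 2 then show ?thesis using Rxy by auto
      next
        case 3
        then have "?R u x" "?R x u" using Ax u by (auto simp: induced_def)
        then show ?thesis by auto
      next
        case 4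
        then have "?R u y" "?R y u" using By u by (auto simp: induced_def)
        then show ?thesis using Rxy
          by (meson converse_rtranclp_into_rtranclp r_into_rtranclp rtranclp.rtrancl_into_rtrancl)
      qed
    qed
    show ?thesis unfolding connected_on_def
    proof (intro conjI ballI)
      show "?S \<noteq> {}" by blast
      fix u v assume "u \<in> ?S" "v \<in> ?S"
      then have "?R\<^sup>*\<^sup>* u x" "?R\<^sup>*\<^sup>* x v" using to by auto
      then show "?R\<^sup>*\<^sup>* u v" by (rule rtranclp_trans)
    qed
  qed
  show ?thesis unfolding homogeneous_bip_def
  proof (intro conjI allI impI)
    show "bip_graph (A \<union> B) A B (induced E (A \<union> B))"
      unfolding bip_graph_def induced_def
    proof (intro conjI allI impI)
      fix u v assume "u \<in> A \<union> B \<and> v \<in> A \<union> B \<and> E u v"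
      then show "(u \<in> A \<and> v \<in> B) \<or> (u \<in> B \<and> v \<in> A)"
        using AY BX noXX[OF bg] noYY[OF bg] by blast
    qed (use AB sym in blast)+
  next
    fix S T f
    assume "S \<subseteq> A \<union> B \<and> T \<subseteq> A \<union> B \<and> finite S \<and> bip_iso A B (induced E (A \<union> B)) S T f"
    then have S: "S \<subseteq> A \<union> B" and T: "T \<subseteq> A \<union> B" and fS: "finite S"
      and iso: "bip_iso A B (induced E (A \<union> B)) S T f" by auto
    have bijf: "bij_betw f S T" and fA: "f ` (S \<inter> A) \<subseteq> A" and fB: "f ` (S \<inter> B) \<subseteq> B"
      and fE: "\<And>u v. u \<in> S \<Longrightarrow> v \<in> S \<Longrightarrow> induced E (A \<union> B) u v \<longleftrightarrow> induced E (A \<union> B) (f u) (f v)"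
      using iso by (auto simp: bip_iso_def)
    have fT: "\<And>u. u \<in> S \<Longrightarrow> f u \<in> T" using bijf by (auto simp: bij_betw_def)
    have fE': "E u v \<longleftrightarrow> E (f u) (f v)" if uv: "u \<in> S" "v \<in> S" for u v
    proof -
      have "u \<in> A \<union> B" "v \<in> A \<union> B" "f u \<in> A \<union> B" "f v \<in> A \<union> B"
        using uv S T fT by blast+
      then show ?thesis using fE[OF uv] by (simp add: induced_def)
    qed
    define f' where "f' = f(x := x, y := y)"
    have f'S: "\<And>u. u \<in> S \<Longrightarrow> f' u = f u" using xyAB S by (auto simp: f'_def)
    have f'x: "f' x = x" "f' y = y" using xyAB by (auto simp: f'_def)
    have fAu: "\<And>u. u \<in> S \<Longrightarrow> u \<in> A \<Longrightarrow> f u \<in> A" using fA by blast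
    have fBu: "\<And>u. u \<in> S \<Longrightarrow> u \<in> B \<Longrightarrow> f u \<in> B" using fB by blast
    have "bij_betw f' S T = bij_betw f S T" by (rule bij_betw_cong) (rule f'S)
    then have b1: "bij_betw f' S T" using bijf by simp
    have b2: "bij_betw f' {x, y} {x, y}" unfolding bij_betw_def inj_on_def f'x(1) f'x(2)
      using f'x xyAB by auto
    have b: "bij_betw f' (S \<union> {x, y}) (T \<union> {x, y})"
      by (rule bij_betw_combine[OF b1 b2]) (use T xyAB in blast)
    have edges: "\<forall>u\<in>S \<union> {x, y}. \<forall>v\<in>S \<union> {x, y}. E u v \<longleftrightarrow> E (f' u) (f' v)"
    proof (intro ballI)
      fix u v assume u: "u \<in> S \<union> {x, y}" and v: "v \<in> S \<union> {x, y}"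
      consider "u \<in> S" "v \<in> S" | "u \<in> S \<inter> A" "v \<notin> S" | "u \<in> S \<inter> B" "v \<notin> S"
        | "u \<notin> S" "v \<in> S \<inter> A" | "u \<notin> S" "v \<in> S \<inter> B" | "u \<notin> S" "v \<notin> S"
        using S by blast
      then show "E u v \<longleftrightarrow> E (f' u) (f' v)"
      proof cases
        case 1 then show ?thesis using fE'[OF 1] f'S[OF 1(1)] f'S[OF 1(2)] by simp
      next
        case 2
        have fu: "f' u \<in> A" using fAu f'S 2 by auto
        have "v = x \<or> v = y" using v 2 by blast
        then show ?thesis using Ax[of u] Ax[of "f' u"] fu 2 f'x by auto
      next
        case 3
        have fu: "f' u \<in> B" using fBu f'S 3 by auto
        have "v = x \<or> v = y" using v 3 by blast
        then show ?thesis using By[of u] By[of "f' u"] fu 3 f'x by auto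
      next
        case 4
        have fu: "f' v \<in> A" using fAu f'S 4 by auto
        have "u = x \<or> u = y" using u 4 by blast
        then show ?thesis using Ax[of v] Ax[of "f' v"] fu 4 f'x by auto
      next
        case 5
        have fu: "f' v \<in> B" using fBu f'S 5 by auto
        have "u = x \<or> u = y" using u 5 by blast
        then show ?thesis using By[of v] By[of "f' v"] fu 5 f'x by auto
      next
        case 6 then show ?thesis using u v f'x xy yx nxx by auto
      qed
    qed
    have SX: "f' ` ((S \<union> {x, y}) \<inter> X) \<subseteq> X"
    proof
      fix w assume "w \<in> f' ` ((S \<union> {x, y}) \<inter> X)"
      then obtain u where u: "u \<in> S \<union> {x, y}" "u \<in> X" "w = f' u" by blast
      show "w \<in> X"
      proof (cases "u \<in> S")
        case True
        then have "u \<in> B" using u S AY XY by blast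
        then show ?thesis using fBu True f'S u BX by auto
      next
        case False
        then show ?thesis using u f'x x y XY by auto
      qed
    qed
    have SY: "f' ` ((S \<union> {x, y}) \<inter> Y) \<subseteq> Y"
    proof
      fix w assume "w \<in> f' ` ((S \<union> {x, y}) \<inter> Y)"
      then obtain u where u: "u \<in> S \<union> {x, y}" "u \<in> Y" "w = f' u" by blast
      show "w \<in> Y"
      proof (cases "u \<in> S")
        case True
        then have "u \<in> A" using u S BX XY by blast
        then show ?thesis using fAu True f'S u AY by auto
      next
        case False
        then show ?thesis using u f'x x y XY by auto
      qed
    qed
    have iso': "bip_iso X Y E (S \<union> {x, y}) (T \<union> {x, y}) f'"
      unfolding bip_iso_def using b edges SX SY by blast
    have ext: "\<And>S T f. S \<subseteq> V \<Longrightarrow> T \<subseteq> V \<Longrightarrow> finite S \<Longrightarrow> connected_on E S \<Longrightarrow>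
        connected_on E T \<Longrightarrow> bip_iso X Y E S T f \<Longrightarrow> \<exists>g. bip_aut V X Y E g \<and> (\<forall>v\<in>S. g v = f v)"
      using ch unfolding conn_homogeneous_bip_def by blast
    have sub: "S \<union> {x, y} \<subseteq> V" "T \<union> {x, y} \<subseteq> V" using S T ABV xyV by auto
    have fin': "finite (S \<union> {x, y})" using fS by simp
    obtain g where g: "bip_aut V X Y E g" "\<forall>v\<in>S \<union> {x, y}. g v = f' v"
      using ext[OF sub fin' conn[OF S] conn[OF T] iso'] by blast
    have gx: "g x = x" "g y = y" using g(2) f'x by auto
    have ginj: "inj_on g V" and gV: "g ` V = V" using g(1) by (auto simp: bip_aut_def bij_betw_def)
    have gE: "\<And>u v. u \<in> V \<Longrightarrow> v \<in> V \<Longrightarrow> E u v \<longleftrightarrow> E (g u) (g v)" using g(1) by (auto simp: bip_aut_def)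
    have NxV: "nbrs E x \<subseteq> V" "nbrs E y \<subseteq> V" using inV by (auto simp: nbrs_def)
    have Nx: "g ` nbrs E x = nbrs E x" using aut_nbrs[OF bg g(1) xyV(1)] gx by simp
    have Ny: "g ` nbrs E y = nbrs E y" using aut_nbrs[OF bg g(1) xyV(2)] gx by simp
    have gA: "g ` A = A"
    proof -
      have "g ` (nbrs E x - {y}) = g ` nbrs E x - g ` {y}"
        by (rule inj_on_image_set_diff[OF ginj]) (use NxV xyV in auto)
      then have "g ` A = g ` nbrs E x - g ` {y}" unfolding A_def .
      then show ?thesis using Nx gx A_def by simp
    qed
    have gB: "g ` B = B"
    proof -
      have "g ` (nbrs E y - {x}) = g ` nbrs E y - g ` {x}"
        by (rule inj_on_image_set_diff[OF ginj]) (use NxV xyV in auto)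
      then have "g ` B = g ` nbrs E y - g ` {x}" unfolding B_def .
      then show ?thesis using Ny gx B_def by simp
    qed
    have gAB: "g ` (A \<union> B) = A \<union> B" using gA gB by (simp add: image_Un)
    have "bip_aut (A \<union> B) A B (induced E (A \<union> B)) g"
      unfolding bip_aut_def bij_betw_def
    proof (intro conjI ballI)
      show "inj_on g (A \<union> B)" using ginj ABV inj_on_subset by blast
      show "g ` (A \<union> B) = A \<union> B" by (fact gAB)
      show "g ` A = A" by (fact gA)
      show "g ` B = B" by (fact gB)
      fix u v assume uv: "u \<in> A \<union> B" "v \<in> A \<union> B"
      then have guv: "g u \<in> A \<union> B" "g v \<in> A \<union> B" using gAB by auto
      have "u \<in> V" "v \<in> V" using uv ABV by auto
      note e = gE[OF this]
      show "induced E (A \<union> B) u v = induced E (A \<union> B) (g u) (g v)"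
        unfolding induced_def using uv guv e by simp
    qed
    moreover have "\<forall>v\<in>S. g v = f v" using g(2) f'S by auto
    ultimately show "\<exists>g. bip_aut (A \<union> B) A B (induced E (A \<union> B)) g \<and> (\<forall>v\<in>S. g v = f v)" by blast
  qed
qed

theorem lemma4p5:
  fixes V X Y :: "'a set" and E :: "'a \<Rightarrow> 'a \<Rightarrow> bool" and x y :: 'a
  assumes "conn_homogeneous_bip V X Y E"
    and "connected_on E V"
    and "locally_finite V E"
    and "x \<in> X" and "y \<in> Y" and "E x y"
  defines "A \<equiv> nbrs E x - {y}" and "B \<equiv> nbrs E y - {x}"
  shows "finite (A \<union> B) \<and> homogeneous_bip (A \<union> B) A B (induced E (A \<union> B)) \<and>
    (null_bip A B (induced E (A \<union> B)) \<or> complete_bip A B (induced E (A \<union> B)) \<or>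
     co_perfect_matching_bip A B (induced E (A \<union> B)) \<or>
     perfect_matching_bip A B (induced E (A \<union> B)))"
proof -
  have bg: "bip_graph V X Y E" using assms(1) by (simp add: conn_homogeneous_bip_def)
  have "x \<in> V" "y \<in> V" using bg assms(6) unfolding bip_graph_def by blast+
  then have "finite (nbrs E x)" "finite (nbrs E y)" using assms(3) by (auto simp: locally_finite_def)
  then have fin: "finite (A \<union> B)" unfolding A_def B_def by simp
  have hom: "homogeneous_bip (A \<union> B) A B (induced E (A \<union> B))"
    by (rule omega_hom[OF assms(1) assms(4) assms(5) assms(6)]) (simp_all add: A_def B_def)
  show ?thesis using fin hom classify[OF hom fin] by blast
qed

end
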